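(* Let $f$ be a harmonic function on $K$ with $f(p_0)=\alpha$, $f(p_1)=\beta$, $f(p_2)=\gamma$, and let $g$ be its restriction to $[p_1,p_2]\cong[0,1]$. If $2\beta=\alpha+\gamma$, then the (right) derivative of $g$ at $0$ (i.e. at $p_1$) is $0$; otherwise it is infinite ($+\infty$ or $-\infty$). Similarly, if $2\gamma=\alpha+\beta$, then the (left) derivative of $g$ at $1$ (i.e. at $p_2$) is $0$; otherwise it is infinite.
   Context: Let $p_0,p_1,p_2$ be the vertices of a unit equilateral triangle in $\mathbb{R}^2$, $F_i(x)=(x+p_i)/2$, and $K$ the Sierpinski gasket (the attractor of $F_0,F_1,F_2$). Minimal triangles of the graph $G_m$ are the triangles with vertices $F_w(p_0),F_w(p_1),F_w(p_2)$ for words $w$ of length $m$. A continuous $f:K\to\mathbb{R}$ is harmonic if for every $m\ge0$ and every minimal triangle of $G_m$ with vertices $v_i,v_j,v_k$, the value at the midpoint $v_{ij}$ of $[v_i,v_j]$ is $\frac15(2f(v_i)+2f(v_j)+f(v_k))$; such $f$ is uniquely determined by its values at $p_0,p_1,p_2$. The edge $[p_1,p_2]$ is identified with $[0,1]$ via $t\mapsto p_1+t(p_2-p_1)$. *)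

theory Defs
  imports "HOL-Analysis.Analysis"
begin

text \<open>Vertices are given as a family p :: nat => complex (indices 0,1,2), points of R^2 = complex plane.\<close>

definition sg_map :: "(nat \<Rightarrow> complex) \<Rightarrow> nat \<Rightarrow> complex \<Rightarrow> complex" where
  "sg_map p i x = (x + p i) / 2"

definition sg_word :: "(nat \<Rightarrow> complex) \<Rightarrow> nat list \<Rightarrow> complex \<Rightarrow> complex" where
  "sg_word p w = foldr (\<lambda>i g. sg_map p i \<circ> g) w id"

definition unit_equilateral :: "(nat \<Rightarrow> complex) \<Rightarrow> bool" where
  "unit_equilateral p \<longleftrightarrow> dist (p 0) (p 1) = 1 \<and> dist (p 1) (p 2) = 1 \<and> dist (p 0) (p 2) = 1"

definition sg_attractor :: "(nat \<Rightarrow> complex) \<Rightarrow> complex set \<Rightarrow> bool" where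
  "sg_attractor p K \<longleftrightarrow> compact K \<and> K \<noteq> {} \<and>
     K = sg_map p 0 ` K \<union> sg_map p 1 ` K \<union> sg_map p 2 ` K"

definition sg_harmonic :: "(nat \<Rightarrow> complex) \<Rightarrow> complex set \<Rightarrow> (complex \<Rightarrow> real) \<Rightarrow> bool" where
  "sg_harmonic p K f \<longleftrightarrow> continuous_on K f \<and>
     (\<forall>w i j k. set w \<subseteq> {0,1,2} \<longrightarrow> {i,j,k} = {0,1,2::nat} \<longrightarrow>
        f ((sg_word p w (p i) + sg_word p w (p j)) / 2) =
          (2 * f (sg_word p w (p i)) + 2 * f (sg_word p w (p j)) + f (sg_word p w (p k))) / 5)"

end

theory Submission
  imports Defs
begin


definition eg :: "(nat \<Rightarrow> complex) \<Rightarrow> real \<Rightarrow> complex" where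
  "eg p t = p 1 + of_real t * (p 2 - p 1)"

lemma sg_word_Nil[simp]: "sg_word p [] = id"
  by (simp add: sg_word_def)

lemma sg_word_Cons[simp]: "sg_word p (i # w) = sg_map p i \<circ> sg_word p w"
  by (simp add: sg_word_def)

lemma sg_word_append: "sg_word p (w @ v) = sg_word p w \<circ> sg_word p v"
  by (induction w) auto

lemma sg_word_mid: "sg_word p w ((x + y) / 2) = (sg_word p w x + sg_word p w y) / 2"
proof (induction w)
  case Nil then show ?case by simp
next
  case (Cons i w)
  have "sg_word p (i # w) ((x + y) / 2) = ((sg_word p w x + sg_word p w y) / 2 + p i) / 2"
    by (simp add: sg_map_def Cons.IH)
  also have "\<dots> = (sg_word p (i # w) x + sg_word p (i # w) y) / 2"
    by (simp add: sg_map_def field_simps)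
  finally show ?case .
qed

lemma sg_word_diff: "sg_word p w x - sg_word p w y = (x - y) / 2 ^ length w"
proof (induction w)
  case Nil then show ?case by simp
next
  case (Cons i w)
  have "sg_word p (i # w) x - sg_word p (i # w) y = (sg_word p w x - sg_word p w y) / 2"
    by (simp add: sg_map_def field_simps)
  then show ?case by (simp add: Cons.IH)
qed

lemma sg_word_in: "set v \<subseteq> {0,1,2} \<Longrightarrow> sg_attractor p K \<Longrightarrow> x \<in> K \<Longrightarrow> sg_word p v x \<in> K"
proof (induction v)
  case Nil then show ?case by simp
next
  case (Cons i v)
  then have xi: "sg_word p v x \<in> K" and i: "i \<in> {0,1,2}" by auto
  have eq: "K = sg_map p 0 ` K \<union> sg_map p 1 ` K \<union> sg_map p 2 ` K"
    using Cons.prems(2) by (simp add: sg_attractor_def)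
  show ?case using i xi eq by auto
qed

lemma harm_mid:
  assumes "sg_harmonic p K f" "set w \<subseteq> {0,1,2}" "i \<in> {0,1,2}" "j \<in> {0,1,2}" "i \<noteq> j"
  shows "\<exists>k\<in>{0,1,2}. f (sg_word p w (sg_map p j (p i))) =
     (2 * f (sg_word p w (p i)) + 2 * f (sg_word p w (p j)) + f (sg_word p w (p k))) / 5"
proof -
  have k: "{i, j, 3 - i - j} = {0,1,2::nat}" "3 - i - j \<in> {0,1,2::nat}" using assms(3-5) by auto
  have pm: "sg_map p j (p i) = (p i + p j) / 2" by (simp add: sg_map_def)
  have "f (sg_word p w (sg_map p j (p i))) = f ((sg_word p w (p i) + sg_word p w (p j)) / 2)"
    unfolding pm sg_word_mid by (rule refl)
  also have "\<dots> = (2 * f (sg_word p w (p i)) + 2 * f (sg_word p w (p j)) + f (sg_word p w (p (3-i-j)))) / 5"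
    using assms(1,2) k(1) unfolding sg_harmonic_def by blast
  finally show ?thesis using k(2) by blast
qed

lemma cell_bound:
  assumes H: "sg_harmonic p K f" and w: "set w \<subseteq> {0,1,2}"
    and b: "\<And>i. i \<in> {0,1,2} \<Longrightarrow> lo \<le> f (sg_word p w (p i)) \<and> f (sg_word p w (p i)) \<le> hi"
    and v: "set v \<subseteq> {0,1,2}" and i: "i \<in> {0,1,2}"
  shows "lo \<le> f (sg_word p (w @ v) (p i)) \<and> f (sg_word p (w @ v) (p i)) \<le> hi"
  using v i
proof (induction v arbitrary: i rule: rev_induct)
  case Nil then show ?case using b by simp
next
  case (snoc j v)
  have j: "j \<in> {0,1,2}" and v: "set v \<subseteq> {0,1,2}" using snoc.prems by auto
  have wv: "set (w @ v) \<subseteq> {0,1,2}" using w v by auto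
  have eq: "sg_word p (w @ v @ [j]) (p i) = sg_word p (w @ v) (sg_map p j (p i))"
    by (simp add: sg_word_append)
  show ?case
  proof (cases "i = j")
    case True
    have "sg_map p j (p i) = p i" using True by (simp add: sg_map_def)
    then show ?thesis using snoc.IH[OF v snoc.prems(2)] eq by simp
  next
    case False
    obtain k where k: "k \<in> {0,1,2}" and fk: "f (sg_word p (w @ v) (sg_map p j (p i))) =
     (2 * f (sg_word p (w @ v) (p i)) + 2 * f (sg_word p (w @ v) (p j)) + f (sg_word p (w @ v) (p k))) / 5"
      using harm_mid[OF H wv snoc.prems(2) j False] by blast
    show ?thesis using snoc.IH[OF v snoc.prems(2)] snoc.IH[OF v j] snoc.IH[OF v k] eq fk by simp
  qed
qed

lemma eg_F1: "sg_map p 1 (eg p s) = eg p (s / 2)"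
  by (simp add: sg_map_def eg_def field_simps)
lemma eg_F1s: "sg_map p (Suc 0) (eg p s) = eg p (s / 2)"
  using eg_F1 by simp
lemma eg_F2: "sg_map p 2 (eg p s) = eg p ((s + 1) / 2)"
  by (simp add: sg_map_def eg_def field_simps)

lemma eg_rep: "sg_word p (replicate m 1) (eg p s) = eg p (s * (1/2) ^ m)"
proof (induction m)
  case 0 then show ?case by simp
next
  case (Suc m)
  have "sg_word p (replicate (Suc m) 1) (eg p s) = sg_map p 1 (sg_word p (replicate m 1) (eg p s))"
    by (simp del: replicate.simps add: replicate_Suc)
  also have "\<dots> = eg p (s * (1/2) ^ m / 2)" by (simp only: Suc.IH eg_F1)
  finally show ?case by simp
qed

lemma eg_rep2: "sg_word p (replicate m 1 @ [2]) (eg p s) = eg p ((1/2)^(Suc m) + s * (1/2) ^ (Suc m))"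
proof -
  have "sg_word p (replicate m 1 @ [2]) (eg p s) = sg_word p (replicate m 1) (eg p ((s + 1) / 2))"
    by (simp add: sg_word_append eg_F2)
  also have "\<dots> = eg p ((s + 1) / 2 * (1/2) ^ m)" by (rule eg_rep)
  finally show ?thesis by (simp add: field_simps)
qed

lemma dyadic:
  "k \<le> 2 ^ n \<Longrightarrow> \<exists>v i. set v \<subseteq> {1,2} \<and> length v = n \<and> i \<in> {1,2::nat} \<and> sg_word p v (p i) = eg p (real k / 2 ^ n)"
proof (induction n arbitrary: k)
  case 0
  then have "k = 0 \<or> k = 1" by auto
  then show ?case
  proof
    assume "k = 0" then show ?thesis by (intro exI[of _ "[]"] exI[of _ 1]) (simp add: eg_def)
  next
    assume "k = 1" then show ?thesis by (intro exI[of _ "[]"] exI[of _ 2]) (simp add: eg_def)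
  qed
next
  case (Suc n)
  show ?case
  proof (cases "k \<le> 2 ^ n")
    case True
    then obtain v i where v: "set v \<subseteq> {1,2}" "length v = n" "i \<in> {1,2::nat}" "sg_word p v (p i) = eg p (real k / 2 ^ n)"
      using Suc.IH by blast
    have "sg_word p (1 # v) (p i) = eg p (real k / 2 ^ Suc n)"
      using v(4) by (simp add: eg_F1s field_simps)
    then show ?thesis using v by (intro exI[of _ "1 # v"] exI[of _ i]) auto
  next
    case False
    then have "k - 2 ^ n \<le> 2 ^ n" using Suc.prems by auto
    then obtain v i where v: "set v \<subseteq> {1,2}" "length v = n" "i \<in> {1,2::nat}" "sg_word p v (p i) = eg p (real (k - 2^n) / 2 ^ n)"
      using Suc.IH by blast
    have r: "real (k - 2^n) = real k - 2^n" using False by (simp add: of_nat_diff)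
    have "sg_word p (2 # v) (p i) = eg p (real k / 2 ^ Suc n)"
      using v(4) by (simp add: eg_F2 r field_simps)
    then show ?thesis using v by (intro exI[of _ "2 # v"] exI[of _ i]) auto
  qed
qed

lemma dyadic_approx:
  assumes "0 \<le> s" "s \<le> 1"
  shows "\<exists>k::nat. k \<le> 2 ^ n \<and> real k / 2 ^ n \<le> s \<and> s - real k / 2 ^ n < 1 / 2 ^ n"
proof -
  define k where "k = nat \<lfloor>s * 2 ^ n\<rfloor>"
  have f0: "0 \<le> \<lfloor>s * 2 ^ n\<rfloor>" using assms by simp
  have rk: "real k = of_int \<lfloor>s * 2 ^ n\<rfloor>" using f0 by (simp add: k_def)
  have a: "real k \<le> s * 2 ^ n" using rk by linarith
  have b: "s * 2 ^ n < real k + 1" using rk by linarith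
  have "s * 2 ^ n \<le> 2 ^ n" using assms by simp
  then have "real k \<le> 2 ^ n" using a by linarith
  then have "k \<le> 2 ^ n" by (metis of_nat_le_iff of_nat_numeral of_nat_power)
  moreover have "real k / 2 ^ n \<le> s" using a by (simp add: field_simps)
  moreover have "s - real k / 2 ^ n < 1 / 2 ^ n"
  proof -
    have "(s * 2 ^ n - real k) / 2 ^ n < 1 / 2 ^ n"
      by (rule divide_strict_right_mono) (use b in auto)
    then show ?thesis by (simp add: diff_divide_distrib)
  qed
  ultimately show ?thesis by blast
qed

lemma norm_eg: "norm (eg p a - eg p b) = \<bar>a - b\<bar> * norm (p 2 - p 1)"
proof -
  have "eg p a - eg p b = of_real (a - b) * (p 2 - p 1)" by (simp add: eg_def algebra_simps)
  then show ?thesis by (simp only: norm_mult norm_of_real)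
qed

lemma edge_in_K:
  assumes att: "sg_attractor p K" and s: "0 \<le> s" "s \<le> 1"
  shows "eg p s \<in> K"
proof -
  have cK: "closed K" and ne: "K \<noteq> {}" using att by (auto simp: sg_attractor_def compact_imp_closed)
  obtain x0 where x0: "x0 \<in> K" using ne by blast
  define C where "C = norm (x0 - p 1) + norm (x0 - p 2) + norm (p 2 - p 1) + 1"
  have Cpos: "C > 0" unfolding C_def by (smt (verit) norm_ge_zero)
  have "eg p s \<in> closure K" unfolding closure_approachable
  proof (intro allI impI)
    fix e :: real assume e: "e > 0"
    obtain n where n: "(1/2::real)^n < e / C" using real_arch_pow_inv[of "e/C" "1/2"] Cpos e by auto
    obtain k where k: "k \<le> 2 ^ n" "real k / 2 ^ n \<le> s" "s - real k / 2 ^ n < 1 / 2 ^ n"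
      using dyadic_approx[OF s] by blast
    obtain v i where v: "set v \<subseteq> {1,2}" "length v = n" "i \<in> {1,2::nat}" "sg_word p v (p i) = eg p (real k / 2 ^ n)"
      using dyadic[OF k(1)] by blast
    define y where "y = sg_word p v x0"
    have yK: "y \<in> K" unfolding y_def using sg_word_in[of v p K x0] v(1) att x0 by auto
    have "dist y (eg p s) = norm (y - eg p s)" by (simp add: dist_norm)
    also have "\<dots> \<le> norm (y - sg_word p v (p i)) + norm (eg p (real k / 2 ^ n) - eg p s)"
      using v(4) by (metis diff_add_cancel norm_triangle_ineq add_diff_eq diff_diff_eq2)
    also have "norm (y - sg_word p v (p i)) = norm (x0 - p i) / 2 ^ n"
      unfolding y_def sg_word_diff v(2) by (simp add: norm_divide norm_power)
    also have "norm (eg p (real k / 2 ^ n) - eg p s) = \<bar>real k / 2 ^ n - s\<bar> * norm (p 2 - p 1)"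
      by (rule norm_eg)
    also have "norm (x0 - p i) / 2 ^ n + \<bar>real k / 2 ^ n - s\<bar> * norm (p 2 - p 1)
        \<le> (norm (x0 - p 1) + norm (x0 - p 2)) / 2 ^ n + (1 / 2 ^ n) * norm (p 2 - p 1)"
    proof (rule add_mono)
      show "norm (x0 - p i) / 2 ^ n \<le> (norm (x0 - p 1) + norm (x0 - p 2)) / 2 ^ n"
        using v(3) by (intro divide_right_mono) auto
      show "\<bar>real k / 2 ^ n - s\<bar> * norm (p 2 - p 1) \<le> (1 / 2 ^ n) * norm (p 2 - p 1)"
        using k by (intro mult_right_mono) auto
    qed
    also have "\<dots> \<le> C * (1/2)^n" unfolding C_def by (simp add: field_simps)
    also have "\<dots> < C * (e / C)" by (rule mult_strict_left_mono) (use n Cpos in auto)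
    also have "\<dots> = e" using Cpos by simp
    finally show "\<exists>y\<in>K. dist y (eg p s) < e" using yK by blast
  qed
  then show ?thesis using cK by simp
qed

lemma g_cont:
  assumes att: "sg_attractor p K" and H: "sg_harmonic p K f" and gdef: "\<And>t. g t = f (eg p t)"
  shows "continuous_on {0..1} g"
proof -
  have g: "g = f \<circ> eg p" using gdef by auto
  have ce: "continuous_on {0..1} (eg p)" unfolding eg_def by (intro continuous_intros)
  have cf: "continuous_on K f" using H by (simp add: sg_harmonic_def)
  have "eg p ` {0..1} \<subseteq> K" using edge_in_K[OF att] by auto
  then show ?thesis unfolding g using continuous_on_compose[OF ce] continuous_on_subset[OF cf] by blast
qed

lemma seg_bound:
  assumes att: "sg_attractor p K" and H: "sg_harmonic p K f" and gdef: "\<And>t. g t = f (eg p t)"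
    and w: "set w \<subseteq> {0,1,2}"
    and b: "\<And>i. i \<in> {0,1,2} \<Longrightarrow> lo \<le> f (sg_word p w (p i)) \<and> f (sg_word p w (p i)) \<le> hi"
    and weg: "\<And>s. sg_word p w (eg p s) = eg p (a + s * h)"
    and ah: "0 \<le> a" "0 \<le> h" "a + h \<le> 1" and s: "0 \<le> s" "s \<le> 1"
  shows "lo \<le> g (a + s * h) \<and> g (a + s * h) \<le> hi"
proof -
  define G where "G = (\<lambda>s. g (a + s * h))"
  have cg: "continuous_on {0..1} g" by (rule g_cont[OF att H gdef])
  have sub: "(\<lambda>s. a + s * h) ` {0..1} \<subseteq> {0..1}"
  proof
    fix x assume "x \<in> (\<lambda>s. a + s * h) ` {0..1}"
    then obtain u where u: "0 \<le> u" "u \<le> 1" "x = a + u * h" by auto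
    have "u * h \<le> h" using u ah by (simp add: mult_left_le_one_le)
    then show "x \<in> {0..1}" using u ah by auto
  qed
  have ca: "continuous_on {0..1} (\<lambda>s. a + s * h)" by (intro continuous_intros)
  have cG: "continuous_on {0..1} G" unfolding G_def
    using continuous_on_compose[OF ca continuous_on_subset[OF cg sub]] by (simp add: o_def)
  define S where "S = G -` {lo..hi} \<inter> {0..1}"
  have cS: "closed S" unfolding S_def using cG continuous_on_closed_vimage[of "{0..1}" G] by auto
  have "s \<in> closure S" unfolding closure_approachable
  proof (intro allI impI)
    fix e :: real assume e: "e > 0"
    obtain n where n: "(1/2::real)^n < e" using real_arch_pow_inv[of e "1/2"] e by auto
    obtain k where k: "k \<le> 2 ^ n" "real k / 2 ^ n \<le> s" "s - real k / 2 ^ n < 1 / 2 ^ n"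
      using dyadic_approx[OF s] by blast
    obtain v i where v: "set v \<subseteq> {1,2}" "length v = n" "i \<in> {1,2::nat}" "sg_word p v (p i) = eg p (real k / 2 ^ n)"
      using dyadic[OF k(1)] by blast
    define y where "y = real k / 2 ^ n"
    have y01: "0 \<le> y" "y \<le> 1" unfolding y_def using k(1)
      by (auto simp: field_simps)
    have "G y = f (sg_word p (w @ v) (p i))"
      by (simp only: G_def gdef sg_word_append o_def v(4) weg y_def)
    then have "G y \<in> {lo..hi}" using cell_bound[OF H w b, of v i] v by auto
    then have "y \<in> S" unfolding S_def using y01 by auto
    moreover have "dist y s < e" using k n unfolding y_def dist_real_def by (simp add: power_one_over)
    ultimately show "\<exists>y\<in>S. dist y s < e" by blast
  qed
  then have "s \<in> S" using cS by simp
  then show ?thesis unfolding S_def G_def by auto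
qed

lemma find_m:
  assumes "0 < (t::real)" "t \<le> 1"
  shows "\<exists>m. (1/2)^(Suc m) \<le> t \<and> t \<le> (1/2)^m"
proof -
  obtain n where n: "(1/2::real)^n < t" using real_arch_pow_inv[of t "1/2"] assms by auto
  define N where "N = (LEAST n. (1/2::real)^n < t)"
  have N: "(1/2::real)^N < t" unfolding N_def using n by (rule LeastI)
  have N0: "N \<noteq> 0"
  proof
    assume "N = 0" then show False using N assms by simp
  qed
  then obtain m where m: "N = Suc m" using not0_implies_Suc by blast
  have "\<not> (1/2::real)^m < t" using m N_def not_less_Least[of m "\<lambda>n. (1/2::real)^n < t"] by simp
  then show ?thesis using N m by (intro exI[of _ m]) auto
qed

lemma harm:
  assumes "sg_harmonic p K f" "set w \<subseteq> {0,1,2}" "{i,j,k} = {0,1,2::nat}"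
  shows "f ((sg_word p w (p i) + sg_word p w (p j)) / 2) =
    (2 * f (sg_word p w (p i)) + 2 * f (sg_word p w (p j)) + f (sg_word p w (p k))) / 5"
  using assms unfolding sg_harmonic_def by blast

lemma rep_set: "set (replicate m (1::nat)) \<subseteq> {0,1,2}"
  by auto

lemma rep_Suc_app: "sg_word p (replicate (Suc m) 1) x = sg_word p (replicate m 1) (sg_map p 1 x)"
proof -
  have "replicate (Suc m) (1::nat) = replicate m 1 @ [1]"
    by (induct m) auto
  then show ?thesis by (simp add: sg_word_append)
qed

lemma rep_p1: "sg_word p (replicate m 1) (p 1) = p 1"
  using eg_rep[of p m 0] by (simp add: eg_def)

lemma AC_closed:
  assumes H: "sg_harmonic p K f"
  shows "f (sg_word p (replicate m 1) (p 0)) = f (p 1) + ((f (p 0) + f (p 2) - 2 * f (p 1)) * (3/5)^m + (f (p 0) - f (p 2)) * (1/5)^m) / 2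
       \<and> f (sg_word p (replicate m 1) (p 2)) = f (p 1) + ((f (p 0) + f (p 2) - 2 * f (p 1)) * (3/5)^m - (f (p 0) - f (p 2)) * (1/5)^m) / 2"
proof (induction m)
  case 0 then show ?case by (simp add: field_simps)
next
  case (Suc m)
  define W where "W = sg_word p (replicate m 1)"
  define s where "s = f (p 0) + f (p 2) - 2 * f (p 1)"
  define d where "d = f (p 0) - f (p 2)"
  have IH: "f (W (p 0)) = f (p 1) + (s * (3/5)^m + d * (1/5)^m) / 2"
           "f (W (p 2)) = f (p 1) + (s * (3/5)^m - d * (1/5)^m) / 2"
    using Suc.IH unfolding W_def s_def d_def by auto
  have W1: "W (p 1) = p 1" unfolding W_def by (rule rep_p1)
  have e0: "sg_word p (replicate (Suc m) 1) (p 0) = (W (p 0) + W (p 1)) / 2"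
    unfolding rep_Suc_app W_def[symmetric] by (simp add: sg_map_def sg_word_mid[symmetric] W_def)
  have e2: "sg_word p (replicate (Suc m) 1) (p 2) = (W (p 2) + W (p 1)) / 2"
    unfolding rep_Suc_app W_def[symmetric] by (simp add: sg_map_def sg_word_mid[symmetric] W_def)
  have h0: "f ((W (p 0) + W (p 1)) / 2) = (2 * f (W (p 0)) + 2 * f (W (p 1)) + f (W (p 2))) / 5"
    unfolding W_def by (rule harm[OF H rep_set]) auto
  have h2: "f ((W (p 2) + W (p 1)) / 2) = (2 * f (W (p 2)) + 2 * f (W (p 1)) + f (W (p 0))) / 5"
    unfolding W_def by (rule harm[OF H rep_set]) auto
  have r0: "f (sg_word p (replicate (Suc m) 1) (p 0)) = (2 * f (W (p 0)) + 2 * f (p 1) + f (W (p 2))) / 5"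
    unfolding e0 using h0 unfolding W1 .
  have r2: "f (sg_word p (replicate (Suc m) 1) (p 2)) = (2 * f (W (p 2)) + 2 * f (p 1) + f (W (p 0))) / 5"
    unfolding e2 using h2 unfolding W1 .
  show ?case unfolding r0 r2 IH s_def[symmetric] d_def[symmetric]
    by (simp add: field_simps)
qed

lemma bound0:
  assumes att: "sg_attractor p K" and H: "sg_harmonic p K f" and gdef: "\<And>t. g t = f (eg p t)"
    and s0: "f (p 0) + f (p 2) = 2 * f (p 1)"
    and t: "0 \<le> t" "t \<le> (1/2)^m"
  shows "\<bar>g t - f (p 1)\<bar> \<le> \<bar>f (p 0) - f (p 2)\<bar> * (1/5)^m / 2"
proof -
  define d where "d = f (p 0) - f (p 2)"
  define lo where "lo = f (p 1) - \<bar>d\<bar> * (1/5)^m / 2"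
  define hi where "hi = f (p 1) + \<bar>d\<bar> * (1/5)^m / 2"
  have AC: "f (sg_word p (replicate m 1) (p 0)) = f (p 1) + d * (1/5)^m / 2"
           "f (sg_word p (replicate m 1) (p 2)) = f (p 1) - d * (1/5)^m / 2"
    using AC_closed[OF H, of m] s0 unfolding d_def by auto
  have q: "\<bar>d * (1/5)^m / 2\<bar> = \<bar>d\<bar> * (1/5)^m / 2" by (simp add: abs_mult)
  have b: "lo \<le> f (sg_word p (replicate m 1) (p i)) \<and> f (sg_word p (replicate m 1) (p i)) \<le> hi"
    if "i \<in> {0,1,2}" for i
  proof -
    have "i = 0 \<or> i = 1 \<or> i = 2" using that by auto
    moreover have "0 \<le> \<bar>d\<bar> * (1/5::real)^m / 2" by simp
    ultimately show ?thesis unfolding lo_def hi_def using AC rep_p1[of p m] q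
      by (smt (verit))
  qed
  have hpos: "(0::real) < (1/2)^m" by simp
  define u where "u = t / (1/2)^m"
  have u: "0 \<le> u" "u \<le> 1" unfolding u_def using t hpos by (auto simp: field_simps)
  have tu: "t = 0 + u * (1/2)^m" unfolding u_def using hpos by simp
  have weg: "\<And>s. sg_word p (replicate m 1) (eg p s) = eg p (0 + s * (1/2)^m)"
    using eg_rep by simp
  have "lo \<le> g t \<and> g t \<le> hi"
    unfolding tu by (rule seg_bound[OF att H gdef rep_set b weg]) (use u hpos in \<open>auto simp: power_le_one\<close>)
  then show ?thesis unfolding lo_def hi_def d_def by linarith
qed

lemma zero_case:
  assumes att: "sg_attractor p K" and H: "sg_harmonic p K f" and gdef: "\<And>t. g t = f (eg p t)"
    and s0: "f (p 0) + f (p 2) = 2 * f (p 1)"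
  shows "((\<lambda>t. (g t - g 0) / t) \<longlongrightarrow> 0) (at_right 0)"
  unfolding tendsto_iff
proof (intro allI impI)
  fix e :: real assume e: "e > 0"
  define D where "D = \<bar>f (p 0) - f (p 2)\<bar>"
  have g0: "g 0 = f (p 1)" using gdef by (simp add: eg_def)
  obtain m0 where m0: "(2/5::real)^m0 < e / (D + 1)"
    using real_arch_pow_inv[of "e / (D+1)" "2/5"] e by (auto simp: D_def)
  have "\<exists>b>0. \<forall>t>0. t < b \<longrightarrow> dist ((g t - g 0) / t) 0 < e"
  proof (intro exI[of _ "(1/2::real)^m0"] conjI allI impI)
    show "(0::real) < (1/2)^m0" by simp
    fix t :: real assume t: "0 < t" "t < (1/2)^m0"
    have "(1/2::real)^m0 \<le> 1" by (simp add: power_le_one)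
    then obtain m where m: "(1/2)^(Suc m) \<le> t" "t \<le> (1/2)^m" using find_m[of t] t by auto
    have mm: "m0 \<le> m"
    proof (rule ccontr)
      assume "\<not> m0 \<le> m"
      then have "Suc m \<le> m0" by simp
      then have "(1/2::real)^m0 \<le> (1/2)^(Suc m)" by (rule power_decreasing) auto
      then show False using m t by simp
    qed
    have bd: "\<bar>g t - f (p 1)\<bar> \<le> D * (1/5)^m / 2"
      using bound0[OF att H gdef s0, of t m] t m unfolding D_def by auto
    have "dist ((g t - g 0) / t) 0 = \<bar>g t - f (p 1)\<bar> / t" by (simp add: g0 dist_real_def abs_divide) (use t in simp)
    also have "\<dots> \<le> (D * (1/5)^m / 2) / (1/2)^(Suc m)"
      by (rule frac_le) (use bd m t in \<open>auto simp: D_def\<close>)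
    also have "\<dots> = D * (2/5)^m" by (simp add: power_divide field_simps)
    also have "\<dots> \<le> (D + 1) * (2/5)^m0"
      by (rule mult_mono) (auto simp: D_def intro: power_decreasing mm)
    also have "\<dots> < (D + 1) * (e / (D + 1))"
      by (rule mult_strict_left_mono) (use m0 in \<open>auto simp: D_def\<close>)
    also have "\<dots> = e" by (simp add: D_def)
    finally show "dist ((g t - g 0) / t) 0 < e" .
  qed
  then show "\<forall>\<^sub>F t in at_right 0. dist ((g t - g 0) / t) 0 < e"
    by (subst eventually_at_right[of 0 "1::real"]) (simp, blast)
qed

lemma lin3:
  fixes X Y Z b :: real
  assumes "2 * Z \<le> X" "Y \<le> Z" "- Y \<le> Z" "0 \<le> X"
  shows "b + X / 10 \<le> (2 * (b + (X + Y) / 2) + 2 * (b + (X - Y) / 2) + b) / 5"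
    and "b + X / 10 \<le> (2 * b + 2 * (b + (X - Y) / 2) + (b + (X + Y) / 2)) / 5"
    and "b + X / 10 \<le> b + (X - Y) / 2"
proof -
  show "b + X / 10 \<le> (2 * (b + (X + Y) / 2) + 2 * (b + (X - Y) / 2) + b) / 5" using assms by (simp add: field_simps)
  show "b + X / 10 \<le> (2 * b + 2 * (b + (X - Y) / 2) + (b + (X + Y) / 2)) / 5" using assms by (simp add: field_simps)
  show "b + X / 10 \<le> b + (X - Y) / 2" using assms by (simp add: field_simps)
qed

lemma boundpos:
  assumes att: "sg_attractor p K" and H: "sg_harmonic p K f" and gdef: "\<And>t. g t = f (eg p t)"
    and cond: "2 * \<bar>f (p 0) - f (p 2)\<bar> * (1/5)^m \<le> (f (p 0) + f (p 2) - 2 * f (p 1)) * (3/5)^m"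
    and t: "(1/2)^(Suc m) \<le> t" "t \<le> (1/2)^m"
  shows "f (p 1) + (f (p 0) + f (p 2) - 2 * f (p 1)) * (3/5)^m / 10 \<le> g t"
proof -
  define s where "s = f (p 0) + f (p 2) - 2 * f (p 1)"
  define d where "d = f (p 0) - f (p 2)"
  define r where "r = (3/5::real)^m"
  define q where "q = (1/5::real)^m"
  define b where "b = f (p 1)"
  define W where "W = sg_word p (replicate m 1)"
  define w where "w = replicate m (1::nat) @ [2]"
  have ws: "set w \<subseteq> {0,1,2}" unfolding w_def by auto
  have AC: "f (W (p 0)) = b + (s * r + d * q) / 2" "f (W (p 2)) = b + (s * r - d * q) / 2"
    using AC_closed[OF H, of m] unfolding s_def d_def r_def q_def b_def W_def by auto
  have W1: "W (p 1) = p 1" unfolding W_def by (rule rep_p1)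
  have wW: "sg_word p w x = W (sg_map p 2 x)" for x unfolding w_def W_def by (simp add: sg_word_append)
  have V0: "f (sg_word p w (p 0)) = (2 * f (W (p 0)) + 2 * f (W (p 2)) + f (W (p 1))) / 5"
  proof -
    have "sg_word p w (p 0) = (W (p 0) + W (p 2)) / 2" unfolding wW W_def
      by (simp add: sg_map_def sg_word_mid[symmetric])
    then show ?thesis unfolding W_def by (simp only:) (rule harm[OF H rep_set], auto)
  qed
  have V1: "f (sg_word p w (p 1)) = (2 * f (W (p 1)) + 2 * f (W (p 2)) + f (W (p 0))) / 5"
  proof -
    have "sg_word p w (p 1) = (W (p 1) + W (p 2)) / 2" unfolding wW W_def
      by (simp add: sg_map_def sg_word_mid[symmetric])
    then show ?thesis unfolding W_def by (simp only:) (rule harm[OF H rep_set], auto)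
  qed
  have V2: "sg_word p w (p 2) = W (p 2)" unfolding wW by (simp add: sg_map_def)
  define lo where "lo = b + s * r / 10"
  define hi where "hi = max (max (f (sg_word p w (p 0))) (f (sg_word p w (p 1)))) (f (sg_word p w (p 2)))"
  have c: "2 * (\<bar>d\<bar> * q) \<le> s * r" using cond unfolding s_def d_def r_def q_def by (simp add: mult.assoc)
  have q0: "0 \<le> q" unfolding q_def by simp
  have dq1: "d * q \<le> \<bar>d\<bar> * q" by (rule mult_right_mono) (use q0 in auto)
  have dq2: "(- d) * q \<le> \<bar>d\<bar> * q" by (rule mult_right_mono) (use q0 in auto)
  have dq: "d * q \<le> \<bar>d\<bar> * q" "- (d * q) \<le> \<bar>d\<bar> * q" using dq1 dq2 by auto
  have "0 \<le> \<bar>d\<bar> * q" by (simp add: q_def)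
  then have sr: "0 \<le> s * r" using c by linarith
  have bnd: "lo \<le> f (sg_word p w (p i)) \<and> f (sg_word p w (p i)) \<le> hi" if "i \<in> {0,1,2}" for i
  proof -
    have "lo \<le> f (sg_word p w (p 0))" unfolding V0 AC W1 lo_def b_def[symmetric] using lin3(1)[OF c dq sr] .
    moreover have "lo \<le> f (sg_word p w (p 1))" unfolding V1 AC W1 lo_def b_def[symmetric] using lin3(2)[OF c dq sr] .
    moreover have "lo \<le> f (sg_word p w (p 2))" unfolding V2 AC W1 lo_def b_def[symmetric] using lin3(3)[OF c dq sr] .
    moreover have "i = 0 \<or> i = 1 \<or> i = 2" using that by auto
    ultimately show ?thesis unfolding hi_def by auto
  qed
  define h where "h = (1/2::real)^(Suc m)"
  have hpos: "0 < h" unfolding h_def by simp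
  have h2: "(1/2::real)^m = 2 * h" unfolding h_def by simp
  have h1: "h + h \<le> 1" using h2 power_le_one[of "1/2::real" m] by simp
  define u where "u = (t - h) / h"
  have th1: "h \<le> t" using t(1) unfolding h_def .
  have th2: "t \<le> 2 * h" using t(2) unfolding h2 .
  note th = th1 th2
  have u: "0 \<le> u" "u \<le> 1" unfolding u_def using th hpos by (auto simp: divide_le_eq_1)
  have tu: "t = h + u * h" unfolding u_def using hpos by simp
  have weg: "\<And>x. sg_word p w (eg p x) = eg p (h + x * h)"
    unfolding w_def h_def by (rule eg_rep2)
  have "lo \<le> g t"
    unfolding tu using seg_bound[OF att H gdef ws bnd weg _ _ h1 u] hpos by auto
  then show ?thesis unfolding lo_def b_def s_def r_def by simp
qed

lemma pos_case:
  assumes att: "sg_attractor p K" and H: "sg_harmonic p K f" and gdef: "\<And>t. g t = f (eg p t)"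
    and spos: "f (p 0) + f (p 2) > 2 * f (p 1)"
  shows "filterlim (\<lambda>t. (g t - g 0) / t) at_top (at_right 0)"
  unfolding filterlim_at_top
proof
  fix Z :: real
  define s where "s = f (p 0) + f (p 2) - 2 * f (p 1)"
  define D where "D = \<bar>f (p 0) - f (p 2)\<bar>"
  have s: "s > 0" using spos unfolding s_def by simp
  have D: "D \<ge> 0" unfolding D_def by simp
  have g0: "g 0 = f (p 1)" using gdef by (simp add: eg_def)
  obtain M where M: "(1/3::real)^M < s / (2 * D + 1)"
    using real_arch_pow_inv[of "s / (2 * D + 1)" "1/3"] s D by auto
  obtain n where n: "max Z 0 * 10 / s < (6/5::real)^n"
    using real_arch_pow[of "6/5::real" "max Z 0 * 10 / s"] by auto
  define m0 where "m0 = max M n"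
  have "\<exists>b>0. \<forall>t>0. t < b \<longrightarrow> Z \<le> (g t - g 0) / t"
  proof (intro exI[of _ "(1/2::real)^m0"] conjI allI impI)
    show "(0::real) < (1/2)^m0" by simp
    fix t :: real assume t: "0 < t" "t < (1/2)^m0"
    have "(1/2::real)^m0 \<le> 1" by (simp add: power_le_one)
    then obtain m where m: "(1/2)^(Suc m) \<le> t" "t \<le> (1/2)^m" using find_m[of t] t by auto
    have mm: "m0 \<le> m"
    proof (rule ccontr)
      assume "\<not> m0 \<le> m"
      then have "Suc m \<le> m0" by simp
      then have "(1/2::real)^m0 \<le> (1/2)^(Suc m)" by (rule power_decreasing) auto
      then show False using m t by simp
    qed
    have Mm: "M \<le> m" "n \<le> m" using mm unfolding m0_def by auto
    have "(1/3::real)^m \<le> (1/3)^M" by (rule power_decreasing) (use Mm in auto)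
    then have "2 * D * (1/3::real)^m \<le> (2 * D + 1) * (1/3)^M"
      using D by (intro mult_mono) auto
    also have "\<dots> < (2 * D + 1) * (s / (2 * D + 1))"
      by (rule mult_strict_left_mono) (use M D in auto)
    also have "\<dots> = s" using D by simp
    finally have c1: "2 * D * (1/3::real)^m \<le> s" by simp
    have q: "(1/5::real)^m = (1/3)^m * (3/5)^m" by (simp add: power_mult_distrib[symmetric])
    have cond: "2 * D * (1/5::real)^m \<le> s * (3/5)^m"
      unfolding q using mult_right_mono[OF c1, of "(3/5)^m"] by (simp add: mult.assoc)
    have lb: "f (p 1) + s * (3/5)^m / 10 \<le> g t"
      using boundpos[OF att H gdef, of m t] cond m unfolding s_def D_def by auto
    have pos: "0 < s * (3/5::real)^m / 10" using s by simp
    have "Z \<le> max Z 0" by simp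
    also have "\<dots> \<le> s * (6/5::real)^n / 10"
    proof -
      have "max Z 0 * 10 < (6/5::real)^n * s" using n s by (simp add: divide_less_eq)
      then show ?thesis by (simp add: mult.commute)
    qed
    also have "\<dots> \<le> s * (6/5::real)^m / 10"
      using s Mm by (auto intro!: power_increasing)
    also have "\<dots> = (s * (3/5)^m / 10) / (1/2)^m"
    proof -
      have e6: "(6/5::real)^m = (3/5)^m * 2^m" by (simp flip: power_mult_distrib)
      show ?thesis by (simp add: e6 power_one_over)
    qed
    also have "\<dots> \<le> (s * (3/5)^m / 10) / t"
      by (rule divide_left_mono) (use pos t m in auto)
    also have "\<dots> \<le> (g t - g 0) / t"
      by (rule divide_right_mono) (use lb g0 t in auto)
    finally show "Z \<le> (g t - g 0) / t" .
  qed
  then show "\<forall>\<^sub>F t in at_right 0. Z \<le> (g t - g 0) / t"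
    by (subst eventually_at_right[of 0 "1::real"]) (simp, blast)
qed

lemma refl1: "filterlim (\<lambda>y::real. 1 - y) (at_right 0) (at_left 1)"
proof -
  have "((\<lambda>y::real. 1 - y) \<longlongrightarrow> 0) (at_left 1)"
    by (rule tendsto_eq_intros refl)+ simp
  moreover have "eventually (\<lambda>y::real. 1 - y \<in> {0<..} \<and> 1 - y \<noteq> 0) (at_left 1)"
    by (subst eventually_at_left[of 0]) (auto intro!: exI[of _ 0])
  ultimately show ?thesis unfolding filterlim_at by auto
qed

definition swp :: "nat \<Rightarrow> nat" where
  "swp i = (if i = 1 then 2 else if i = 2 then 1 else i)"

lemma swp_word: "sg_word (p \<circ> swp) w = sg_word p (map swp w)"
  by (induction w) (auto simp: sg_map_def)

lemma swp_set: "set w \<subseteq> {0,1,2} \<Longrightarrow> set (map swp w) \<subseteq> {0,1,2}"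
  by (auto simp: swp_def)

lemma swp_harm:
  assumes "sg_harmonic p K f" shows "sg_harmonic (p \<circ> swp) K f"
  unfolding sg_harmonic_def
proof (intro conjI allI impI)
  show "continuous_on K f" using assms by (simp add: sg_harmonic_def)
  fix w :: "nat list" and i j k :: nat assume w: "set w \<subseteq> {0,1,2}" and ijk: "{i,j,k} = {0,1,2::nat}"
  have ijk': "{swp i, swp j, swp k} = {0,1,2}"
  proof -
    have "{swp i, swp j, swp k} = swp ` {i,j,k}" by simp
    also have "\<dots> = swp ` {0,1,2}" using ijk by simp
    also have "\<dots> = {0,1,2}" by (auto simp: swp_def)
    finally show ?thesis .
  qed
  show "f ((sg_word (p \<circ> swp) w ((p \<circ> swp) i) + sg_word (p \<circ> swp) w ((p \<circ> swp) j)) / 2) =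
       (2 * f (sg_word (p \<circ> swp) w ((p \<circ> swp) i)) + 2 * f (sg_word (p \<circ> swp) w ((p \<circ> swp) j)) +
        f (sg_word (p \<circ> swp) w ((p \<circ> swp) k))) / 5"
    unfolding swp_word comp_apply using harm[OF assms swp_set[OF w] ijk'] .
qed

lemma swp_att:
  assumes "sg_attractor p K" shows "sg_attractor (p \<circ> swp) K"
proof -
  have "sg_map (p \<circ> swp) 0 = sg_map p 0" "sg_map (p \<circ> swp) 1 = sg_map p 2" "sg_map (p \<circ> swp) 2 = sg_map p 1"
    by (auto simp: sg_map_def swp_def fun_eq_iff)
  then show ?thesis using assms unfolding sg_attractor_def by auto
qed

lemma swp_eg: "eg (p \<circ> swp) t = eg p (1 - t)"
  by (simp add: eg_def swp_def algebra_simps)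

lemma neg_harm:
  assumes "sg_harmonic p K f" shows "sg_harmonic p K (\<lambda>x. - f x)"
  using assms unfolding sg_harmonic_def by (auto intro: continuous_intros)

lemma one_end:
  assumes att: "sg_attractor p K" and H: "sg_harmonic p K f" and gdef: "\<And>t. g t = f (eg p t)"
  shows "(f (p 0) + f (p 2) = 2 * f (p 1) \<longrightarrow> ((\<lambda>t. (g t - g 0) / t) \<longlongrightarrow> 0) (at_right 0)) \<and>
         (f (p 0) + f (p 2) \<noteq> 2 * f (p 1) \<longrightarrow>
            (filterlim (\<lambda>t. (g t - g 0) / t) at_top (at_right 0) \<or>
             filterlim (\<lambda>t. (g t - g 0) / t) at_bot (at_right 0)))"
proof (intro conjI impI)
  assume "f (p 0) + f (p 2) = 2 * f (p 1)"
  then show "((\<lambda>t. (g t - g 0) / t) \<longlongrightarrow> 0) (at_right 0)" by (rule zero_case[OF att H gdef])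
next
  assume ne: "f (p 0) + f (p 2) \<noteq> 2 * f (p 1)"
  show "filterlim (\<lambda>t. (g t - g 0) / t) at_top (at_right 0) \<or>
             filterlim (\<lambda>t. (g t - g 0) / t) at_bot (at_right 0)"
  proof (cases "f (p 0) + f (p 2) > 2 * f (p 1)")
    case True
    then show ?thesis using pos_case[OF att H gdef] by blast
  next
    case False
    then have "- f (p 0) + - f (p 2) > 2 * - f (p 1)" using ne by simp
    then have "filterlim (\<lambda>t. ((- g t) - (- g 0)) / t) at_top (at_right 0)"
      using pos_case[OF att neg_harm[OF H], of "\<lambda>t. - g t"] gdef by simp
    moreover have "(\<lambda>t. ((- g t) - (- g 0)) / t) = (\<lambda>t. - ((g t - g 0) / t))"
      by (rule ext) (simp add: diff_divide_distrib)
    ultimately have "filterlim (\<lambda>t. - ((g t - g 0) / t)) at_top (at_right 0)" by simp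
    then have "filterlim (\<lambda>t. (g t - g 0) / t) at_bot (at_right 0)"
      by (simp add: filterlim_uminus_at_top)
    then show ?thesis by blast
  qed
qed

theorem lemma5:
  fixes p :: "nat \<Rightarrow> complex" and K :: "complex set" and f :: "complex \<Rightarrow> real"
    and \<alpha> \<beta> \<gamma> :: real and g :: "real \<Rightarrow> real"
  assumes "unit_equilateral p"
    and "sg_attractor p K"
    and "sg_harmonic p K f"
    and "f (p 0) = \<alpha>" and "f (p 1) = \<beta>" and "f (p 2) = \<gamma>"
    and "\<And>t. g t = f (p 1 + of_real t * (p 2 - p 1))"
  shows "(2 * \<beta> = \<alpha> + \<gamma> \<longrightarrow> (g has_real_derivative 0) (at 0 within {0..1})) \<and>
         (2 * \<beta> \<noteq> \<alpha> + \<gamma> \<longrightarrow>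
            (filterlim (\<lambda>t. (g t - g 0) / t) at_top (at_right 0) \<or>
             filterlim (\<lambda>t. (g t - g 0) / t) at_bot (at_right 0))) \<and>
         (2 * \<gamma> = \<alpha> + \<beta> \<longrightarrow> (g has_real_derivative 0) (at 1 within {0..1})) \<and>
         (2 * \<gamma> \<noteq> \<alpha> + \<beta> \<longrightarrow>
            (filterlim (\<lambda>t. (g t - g 1) / (t - 1)) at_top (at_left 1) \<or>
             filterlim (\<lambda>t. (g t - g 1) / (t - 1)) at_bot (at_left 1)))"
proof -
  have gdef: "\<And>t. g t = f (eg p t)" using assms(7) by (simp add: eg_def)
  note E1 = one_end[OF assms(2) assms(3) gdef]
  define g2 where "g2 t = g (1 - t)" for t
  have g2def: "\<And>t. g2 t = f (eg (p \<circ> swp) t)" by (simp add: g2_def gdef swp_eg)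
  note E2 = one_end[OF swp_att[OF assms(2)] swp_harm[OF assms(3)] g2def]
  have q: "(p \<circ> swp) 0 = p 0" "(p \<circ> swp) 1 = p 2" "(p \<circ> swp) 2 = p 1" by (auto simp: swp_def)
  have g20: "g2 0 = g 1" by (simp add: g2_def)
  have fun1: "(\<lambda>y. (g2 (1 - y) - g2 0) / (1 - y)) = (\<lambda>y. - ((g y - g 1) / (y - 1)))"
    by (rule ext) (simp add: g2_def g20, metis minus_diff_eq minus_divide_right)
  have A: "2 * \<beta> = \<alpha> + \<gamma> \<longrightarrow> (g has_real_derivative 0) (at 0 within {0..1})"
  proof
    assume "2 * \<beta> = \<alpha> + \<gamma>"
    then have "((\<lambda>t. (g t - g 0) / t) \<longlongrightarrow> 0) (at_right 0)" using E1 assms(4-6) by auto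
    then show "(g has_real_derivative 0) (at 0 within {0..1})"
      unfolding has_field_derivative_iff at_within_Icc_at_right[of 0 "1::real", OF zero_less_one] by simp
  qed
  have B: "2 * \<beta> \<noteq> \<alpha> + \<gamma> \<longrightarrow>
            (filterlim (\<lambda>t. (g t - g 0) / t) at_top (at_right 0) \<or>
             filterlim (\<lambda>t. (g t - g 0) / t) at_bot (at_right 0))"
    using E1 assms(4-6) by auto
  have C: "2 * \<gamma> = \<alpha> + \<beta> \<longrightarrow> (g has_real_derivative 0) (at 1 within {0..1})"
  proof
    assume "2 * \<gamma> = \<alpha> + \<beta>"
    then have "((\<lambda>t. (g2 t - g2 0) / t) \<longlongrightarrow> 0) (at_right 0)" using E2 assms(4-6) q by auto
    from filterlim_compose[OF this refl1]
    have "((\<lambda>y. - ((g y - g 1) / (y - 1))) \<longlongrightarrow> 0) (at_left 1)" using fun1 by simp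
    from tendsto_minus[OF this]
    have "((\<lambda>y. (g y - g 1) / (y - 1)) \<longlongrightarrow> 0) (at_left 1)" by simp
    then show "(g has_real_derivative 0) (at 1 within {0..1})"
      unfolding has_field_derivative_iff at_within_Icc_at_left[of 0 "1::real", OF zero_less_one] .
  qed
  have D: "2 * \<gamma> \<noteq> \<alpha> + \<beta> \<longrightarrow>
            (filterlim (\<lambda>t. (g t - g 1) / (t - 1)) at_top (at_left 1) \<or>
             filterlim (\<lambda>t. (g t - g 1) / (t - 1)) at_bot (at_left 1))"
  proof
    assume "2 * \<gamma> \<noteq> \<alpha> + \<beta>"
    then have "filterlim (\<lambda>t. (g2 t - g2 0) / t) at_top (at_right 0) \<or>
             filterlim (\<lambda>t. (g2 t - g2 0) / t) at_bot (at_right 0)" using E2 assms(4-6) q by auto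
    then show "filterlim (\<lambda>t. (g t - g 1) / (t - 1)) at_top (at_left 1) \<or>
             filterlim (\<lambda>t. (g t - g 1) / (t - 1)) at_bot (at_left 1)"
    proof
      assume "filterlim (\<lambda>t. (g2 t - g2 0) / t) at_top (at_right 0)"
      from filterlim_compose[OF this refl1]
      have "filterlim (\<lambda>y. - ((g y - g 1) / (y - 1))) at_top (at_left 1)" using fun1 by simp
      then have "filterlim (\<lambda>t. (g t - g 1) / (t - 1)) at_bot (at_left 1)"
        by (simp add: filterlim_uminus_at_top)
      then show ?thesis by blast
    next
      assume "filterlim (\<lambda>t. (g2 t - g2 0) / t) at_bot (at_right 0)"
      from filterlim_compose[OF this refl1]
      have "filterlim (\<lambda>y. - ((g y - g 1) / (y - 1))) at_bot (at_left 1)" using fun1 by simp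
      then have "filterlim (\<lambda>t. (g t - g 1) / (t - 1)) at_top (at_left 1)"
        by (simp add: filterlim_uminus_at_bot)
      then show ?thesis by blast
    qed
  qed
  show ?thesis using A B C D by blast
qed

end
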